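(* Let $(X,d)$ be a complete metric space and $H(X)$ the space of nonempty compact subsets of $X$ with the Hausdorff metric $h$. Fix $n\in\mathbb{N}$ and for each $i\in\mathbb{N}$ let $F_i=\{X;f_{1,i},\dots,f_{n,i}\}$ with continuous maps $f_{r,i}:X\to X$, each a $\phi$-contraction with comparison function $\phi_{r,i}$; let $F_i(A)=\bigcup_{r=1}^n f_{r,i}(A)$ for $A\in H(X)$ and $\phi_i=\max_{r}\phi_{r,i}$. Suppose there is $A_1\in H(X)$ with $\sup_{i\in\mathbb{N}}h(F_i(A_1),A_1)<\infty$, and that $$\sum_{k=1}^\infty\phi_1\circ\phi_2\circ\cdots\circ\phi_k(t)<\infty\quad\text{for every }t>0.$$ Then there is a unique set $A^*\in H(X)$ such that for every $A\in H(X)$ the backward trajectory $\Psi_k(A)=F_1\circ F_2\circ\cdots\circ F_k(A)$ converges to $A^*$ in $(H(X),h)$.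
   Context: A comparison function is a non-decreasing map $\phi:[0,\infty)\to[0,\infty)$ such that $\phi^p(t)\to0$ as $p\to\infty$ for every $t\ge0$ ($\phi^p$ the $p$-fold composition). A map $f:X\to X$ is a $\phi$-contraction if $d(f(x),f(y))\le\phi(d(x,y))$ for all $x,y$. The Hausdorff metric is $h(A,B)=\max\{\max_{x\in A}\min_{y\in B}d(x,y),\max_{y\in B}\min_{x\in A}d(x,y)\}$. *)

theory Defs
  imports "HOL-Analysis.Analysis"
begin

definition comparison_function :: "(real \<Rightarrow> real) \<Rightarrow> bool" where
  "comparison_function \<phi> \<longleftrightarrow>
     (\<forall>t\<ge>0. \<phi> t \<ge> 0) \<and> mono_on {0..} \<phi> \<and>
     (\<forall>t\<ge>0. (\<lambda>p. (\<phi> ^^ p) t) \<longlonglongrightarrow> 0)"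

definition phi_contraction :: "(real \<Rightarrow> real) \<Rightarrow> ('a::metric_space \<Rightarrow> 'a) \<Rightarrow> bool" where
  "phi_contraction \<phi> f \<longleftrightarrow> (\<forall>x y. dist (f x) (f y) \<le> \<phi> (dist x y))"

fun lcomp :: "(nat \<Rightarrow> 'b \<Rightarrow> 'b) \<Rightarrow> nat \<Rightarrow> 'b \<Rightarrow> 'b" where
  "lcomp g 0 = id"
| "lcomp g (Suc k) = lcomp g k \<circ> g (Suc k)"

definition hutch :: "nat \<Rightarrow> (nat \<Rightarrow> nat \<Rightarrow> 'a \<Rightarrow> 'a) \<Rightarrow> nat \<Rightarrow> 'a set \<Rightarrow> 'a set" where
  "hutch n f i A = (\<Union>r\<in>{1..n}. f r i ` A)"

definition maxphi :: "nat \<Rightarrow> (nat \<Rightarrow> nat \<Rightarrow> real \<Rightarrow> real) \<Rightarrow> nat \<Rightarrow> real \<Rightarrow> real" where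
  "maxphi n \<phi> i t = Max ((\<lambda>r. \<phi> r i t) ` {1..n})"

text \<open>Hausdorff metric on nonempty compact sets: h(A,B) = max(max_{x\<in>A} min_{y\<in>B} d(x,y),
  max_{y\<in>B} min_{x\<in>A} d(x,y)); for nonempty compact A, B the max/min are attained, so
  they coincide with Sup/infdist used here.\<close>
definition hausdist :: "'a::metric_space set \<Rightarrow> 'a set \<Rightarrow> real" where
  "hausdist A B = max (SUP x\<in>A. infdist x B) (SUP y\<in>B. infdist y A)"

end

theory Submission imports Defs begin

lemma infdist_attain:
  fixes X :: "'a::metric_space set"
  assumes "compact X" "X \<noteq> {}"
  obtains x where "x \<in> X" "infdist y X = dist y x"
proof -
  have "continuous_on X (\<lambda>x. dist y x)" by (intro continuous_intros)
  then obtain x where x: "x \<in> X" "\<forall>z\<in>X. dist y x \<le> dist y z"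
    using continuous_attains_inf[OF assms] by blast
  have "infdist y X = dist y x"
  proof (rule antisym)
    show "infdist y X \<le> dist y x" using x(1) by (rule infdist_le)
    show "dist y x \<le> infdist y X" unfolding infdist_notempty[OF assms(2)]
      using x assms(2) by (intro cINF_greatest) auto
  qed
  with x(1) show ?thesis using that by blast
qed

lemma hausdist_le:
  assumes "A \<noteq> {}" "B \<noteq> {}" "\<And>x. x \<in> A \<Longrightarrow> infdist x B \<le> e"
    "\<And>y. y \<in> B \<Longrightarrow> infdist y A \<le> e"
  shows "hausdist A B \<le> e"
  unfolding hausdist_def using assms by (intro max.boundedI cSUP_least) auto

lemma infdist_le_hausdist:
  fixes A :: "'a::metric_space set"
  assumes "compact A" "x \<in> A"
  shows "infdist x B \<le> hausdist A B"
proof -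
  obtain c r where r: "\<And>z. z \<in> A \<Longrightarrow> dist c z \<le> r"
    using compact_imp_bounded[OF assms(1)] unfolding bounded_def by blast
  have "bdd_above ((\<lambda>z. infdist z B) ` A)"
  proof (rule bdd_aboveI2)
    fix z assume "z \<in> A"
    have "infdist z B \<le> infdist c B + dist z c" by (rule infdist_triangle)
    also have "\<dots> \<le> infdist c B + r" using r[OF \<open>z \<in> A\<close>] by (simp add: dist_commute)
    finally show "infdist z B \<le> infdist c B + r" .
  qed
  then have "infdist x B \<le> (SUP z\<in>A. infdist z B)" using assms(2) by (rule cSUP_upper2) simp
  then show ?thesis unfolding hausdist_def by simp
qed

lemma hausdist_sym: "hausdist A B = hausdist B A"
  unfolding hausdist_def by (simp add: max.commute)

lemma hausdist_nonneg:
  fixes A :: "'a::metric_space set"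
  assumes "compact A" "A \<noteq> {}"
  shows "0 \<le> hausdist A B"
proof -
  obtain x where "x \<in> A" using assms by blast
  then show ?thesis using infdist_le_hausdist[OF assms(1), of x B] infdist_nonneg[of x B] by linarith
qed

lemma hausdist_triangle:
  fixes A :: "'a::metric_space set"
  assumes "compact A" "A \<noteq> {}" "compact B" "B \<noteq> {}" "compact C" "C \<noteq> {}"
  shows "hausdist A C \<le> hausdist A B + hausdist B C"
proof (rule hausdist_le)
  show "A \<noteq> {}" "C \<noteq> {}" by fact+
  fix x assume x: "x \<in> A"
  obtain y where y: "y \<in> B" "infdist x B = dist x y" using infdist_attain[OF assms(3,4)] by blast
  have "infdist x C \<le> infdist y C + dist x y" by (rule infdist_triangle)
  also have "\<dots> \<le> hausdist B C + hausdist A B"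
    using infdist_le_hausdist[OF assms(3) y(1), of C] infdist_le_hausdist[OF assms(1) x, of B] y(2)
    by linarith
  finally show "infdist x C \<le> hausdist A B + hausdist B C" by simp
next
  fix z assume z: "z \<in> C"
  obtain y where y: "y \<in> B" "infdist z B = dist z y" using infdist_attain[OF assms(3,4)] by blast
  have "infdist z A \<le> infdist y A + dist z y" by (rule infdist_triangle)
  also have "\<dots> \<le> hausdist A B + hausdist B C"
    using infdist_le_hausdist[OF assms(3) y(1), of A] infdist_le_hausdist[OF assms(5) z, of B] y(2)
      hausdist_sym[of A B] hausdist_sym[of B C]
    by linarith
  finally show "infdist z A \<le> hausdist A B + hausdist B C" .
qed

lemma hausdist_zero_eq:
  fixes A :: "'a::metric_space set"
  assumes "compact A" "A \<noteq> {}" "compact B" "B \<noteq> {}" "hausdist A B \<le> 0"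
  shows "A = B"
proof
  show "A \<subseteq> B"
  proof
    fix x assume "x \<in> A"
    then have "infdist x B = 0" using infdist_le_hausdist[OF assms(1), of x B] infdist_nonneg[of x B] assms(5) by linarith
    then show "x \<in> B" using in_closed_iff_infdist_zero[OF compact_imp_closed[OF assms(3)] assms(4)] by simp
  qed
  show "B \<subseteq> A"
  proof
    fix x assume "x \<in> B"
    then have "infdist x A = 0" using infdist_le_hausdist[OF assms(3), of x A] infdist_nonneg[of x A] assms(5) hausdist_sym[of A B] by linarith
    then show "x \<in> A" using in_closed_iff_infdist_zero[OF compact_imp_closed[OF assms(1)] assms(2)] by simp
  qed
qed


lemma chain_dist:
  fixes s :: "nat \<Rightarrow> 'a::metric_space"
  assumes "\<And>j. dist (s j) (s (Suc j)) \<le> b (m + j)"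
  shows "dist (s j) (s (j + p)) \<le> (\<Sum>i<p. b (m + j + i))"
proof (induction p)
  case 0 then show ?case by simp
next
  case (Suc p)
  have "dist (s j) (s (j + Suc p)) \<le> dist (s j) (s (j + p)) + dist (s (j + p)) (s (Suc (j + p)))"
    by (simp add: dist_triangle)
  also have "\<dots> \<le> (\<Sum>i<p. b (m + j + i)) + b (m + j + p)" using Suc assms[of "j+p"] by (simp add: add.assoc)
  finally show ?case by simp
qed

lemma hausdist_complete:
  fixes B :: "nat \<Rightarrow> 'a::complete_space set"
  assumes BC: "\<And>k. compact (B k)" and BN: "\<And>k. B k \<noteq> {}"
    and Ba: "\<And>k. hausdist (B k) (B (Suc k)) \<le> a k" and sa: "summable a"
  shows "\<exists>S. compact S \<and> S \<noteq> {} \<and> (\<lambda>k. hausdist (B k) S) \<longlonglongrightarrow> 0"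
proof -
  have a0: "0 \<le> a k" for k using hausdist_nonneg[OF BC BN, of k "B (Suc k)"] Ba[of k] by linarith
  define r where "r m = (\<Sum>k. a (k + m))" for m
  have r0: "r \<longlonglongrightarrow> 0" unfolding r_def by (rule suminf_exist_split2[OF sa])
  have sam: "summable (\<lambda>k. a (k + m))" for m by (rule summable_ignore_initial_segment[OF sa])
  have psum: "(\<Sum>i<p. a (m + i)) \<le> r m" for m p
  proof -
    have "(\<Sum>i<p. a (m + i)) = (\<Sum>i<p. a (i + m))" by (simp add: add.commute)
    also have "\<dots> \<le> r m" unfolding r_def using sam[of m] a0 by (intro sum_le_suminf) auto
    finally show ?thesis .
  qed
  have hmk: "hausdist (B m) (B (m + j)) \<le> (\<Sum>i<j. a (m + i))" for m j
  proof (induction j)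
    case 0
    show ?case using hausdist_zero_eq hausdist_le[OF BN BN, of m m "0"] by simp
  next
    case (Suc j)
    have "hausdist (B m) (B (m + Suc j)) \<le> hausdist (B m) (B (m + j)) + hausdist (B (m+j)) (B (Suc (m + j)))"
      using hausdist_triangle[OF BC BN BC BN BC BN] by simp
    also have "\<dots> \<le> (\<Sum>i<j. a (m + i)) + a (m + j)" using Suc Ba[of "m+j"] by linarith
    finally show ?case by simp
  qed
  define S where "S = (\<Inter>m. closure (\<Union>k\<in>{m..}. B k))"
  have Scl: "closed S" unfolding S_def by auto
  have fwd: "\<exists>y\<in>S. dist x y \<le> r m" if x: "x \<in> B m" for x m
  proof -
    have ex: "\<exists>w. w \<in> B (Suc k) \<and> dist z w \<le> a k" if "z \<in> B k" for z k
    proof -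
      obtain w where w: "w \<in> B (Suc k)" "infdist z (B (Suc k)) = dist z w"
        using infdist_attain[OF BC BN] by blast
      have "infdist z (B (Suc k)) \<le> a k"
        using infdist_le_hausdist[OF BC that, of "B (Suc k)"] Ba[of k] by linarith
      with w show ?thesis by auto
    qed
    define nx where "nx k z = (SOME w. w \<in> B (Suc k) \<and> dist z w \<le> a k)" for k z
    have nx: "nx k z \<in> B (Suc k) \<and> dist z (nx k z) \<le> a k" if "z \<in> B k" for z k
      unfolding nx_def using someI_ex[OF ex[OF that]] .
    define s where "s = rec_nat x (\<lambda>j z. nx (m + j) z)"
    have s0: "s 0 = x" and sS: "s (Suc j) = nx (m + j) (s j)" for j unfolding s_def by simp_all
    have sB: "s j \<in> B (m + j)" for j
    proof (induction j)
      case 0 show ?case using x by (simp add: s0)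
    next
      case (Suc j) show ?case using nx[OF Suc] by (simp add: sS)
    qed
    have sd: "dist (s j) (s (Suc j)) \<le> a (m + j)" for j using nx[OF sB[of j]] by (simp add: sS)
    have sdist: "dist (s j) (s (j + p)) \<le> r (m + j)" for j p
    proof -
      have "dist (s j) (s (j + p)) \<le> (\<Sum>i<p. a (m + j + i))"
        by (rule chain_dist[of s a m, OF sd])
      also have "\<dots> \<le> r (m + j)" by (rule psum)
      finally show ?thesis .
    qed
    have "Cauchy s"
    proof (rule metric_CauchyI)
      fix e :: real assume "e > 0"
      have "e / 2 > 0" using \<open>e > 0\<close> by simp
      then obtain N where N: "\<And>j. j \<ge> N \<Longrightarrow> norm (r j - 0) < e / 2"
        using r0 unfolding LIMSEQ_iff by blast
      show "\<exists>M. \<forall>p\<ge>M. \<forall>q\<ge>M. dist (s p) (s q) < e"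
      proof (intro exI allI impI)
        fix p q assume pq: "p \<ge> N" "q \<ge> N"
        have rN: "r (m + N) < e / 2" using N[of "m + N"] by simp
        have "N + (p - N) = p" "N + (q - N) = q" using pq by simp_all
        then have d1: "dist (s N) (s p) < e / 2" and d2: "dist (s N) (s q) < e / 2"
          using sdist[of N "p - N"] sdist[of N "q - N"] rN by (metis order_le_less_trans)+
        show "dist (s p) (s q) < e" using dist_triangle3[of "s p" "s q" "s N"] d1 d2 by linarith
      qed
    qed
    then obtain y where sy: "s \<longlonglongrightarrow> y" using Cauchy_convergent_iff convergent_def by blast
    have "dist x y \<le> r m"
    proof (rule LIMSEQ_le_const2[OF tendsto_dist[OF tendsto_const sy]])
      show "\<exists>N. \<forall>p\<ge>N. dist x (s p) \<le> r m" using sdist[of 0] by (auto simp: s0)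
    qed
    moreover have yc: "y \<in> closure (\<Union>k\<in>{m'..}. B k)" for m'
    proof -
      have L: "(\<lambda>j. s (j + m')) \<longlonglongrightarrow> y" using LIMSEQ_ignore_initial_segment[OF sy] .
      have M: "s (j + m') \<in> closure (\<Union>k\<in>{m'..}. B k)" for j
      proof -
        have "s (j + m') \<in> B (m + (j + m'))" by (rule sB)
        moreover have "m + (j + m') \<in> {m'..}" by simp
        ultimately have "s (j + m') \<in> (\<Union>k\<in>{m'..}. B k)" by (rule UN_I[rotated])
        then show ?thesis using closure_subset by (rule subsetD[rotated])
      qed
      show ?thesis by (rule closed_sequentially[OF closed_closure M L])
    qed
    then have "y \<in> S" unfolding S_def by (rule INT_I[rotated]) 
    ultimately show ?thesis by blast
  qed
  have bwd: "infdist y (B m) \<le> r m" if y: "y \<in> S" for y m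
  proof (rule field_le_epsilon)
    fix e :: real assume e: "e > 0"
    have "y \<in> closure (\<Union>k\<in>{m..}. B k)" using y unfolding S_def by blast
    then obtain z where z: "z \<in> (\<Union>k\<in>{m..}. B k)" "dist z y < e" using closure_approachable e by metis
    then obtain k where k: "k \<ge> m" "z \<in> B k" by auto
    have "infdist z (B m) \<le> hausdist (B k) (B m)" by (rule infdist_le_hausdist[OF BC k(2)])
    also have "\<dots> = hausdist (B m) (B (m + (k - m)))" using k(1) by (simp add: hausdist_sym)
    also have "\<dots> \<le> r m" using hmk[of m "k - m"] psum[of m "k - m"] by linarith
    finally have "infdist z (B m) \<le> r m" .
    moreover have "infdist y (B m) \<le> infdist z (B m) + dist y z" by (rule infdist_triangle)
    ultimately show "infdist y (B m) \<le> r m + e" using z(2) by (simp add: dist_commute)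
  qed
  have SN: "S \<noteq> {}" using fwd[of _ 0] BN[of 0] by blast
  have SC: "compact S" unfolding compact_eq_totally_bounded
  proof (intro conjI allI impI)
    show "complete S" using Scl complete_eq_closed by blast
    fix e :: real assume "e > 0"
    have "e / 2 > 0" using \<open>e > 0\<close> by simp
    then obtain N where N: "\<And>j. j \<ge> N \<Longrightarrow> norm (r j - 0) < e / 2"
      using r0 unfolding LIMSEQ_iff by blast
    define m where "m = N"
    have m: "r m < e / 2" using N[of N] by (simp add: m_def)
    obtain K where K: "finite K" "B m \<subseteq> (\<Union>x\<in>K. ball x (e/2))"
      using BC[of m] \<open>e > 0\<close> unfolding compact_eq_totally_bounded by (meson half_gt_zero)
    show "\<exists>K. finite K \<and> S \<subseteq> (\<Union>x\<in>K. ball x e)"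
    proof (intro exI conjI)
      show "finite K" by fact
      show "S \<subseteq> (\<Union>x\<in>K. ball x e)"
      proof
        fix y assume "y \<in> S"
        obtain z where z: "z \<in> B m" "infdist y (B m) = dist y z" using infdist_attain[OF BC BN] by blast
        have "dist y z < e / 2" using bwd[OF \<open>y \<in> S\<close>, of m] z m by linarith
        moreover obtain c where "c \<in> K" "dist c z < e / 2" using K z(1) by auto
        ultimately have "dist c y < e" using dist_triangle[of c y z] by (simp add: dist_commute)
        then show "y \<in> (\<Union>x\<in>K. ball x e)" using \<open>c \<in> K\<close> by auto
      qed
    qed
  qed
  have hle: "hausdist (B m) S \<le> r m" for m
  proof (rule hausdist_le[OF BN SN])
    fix x assume "x \<in> B m"
    then obtain y where "y \<in> S" "dist x y \<le> r m" using fwd by blast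
    then show "infdist x S \<le> r m" using infdist_le order_trans by blast
  next
    fix y assume "y \<in> S" then show "infdist y (B m) \<le> r m" by (rule bwd)
  qed
  have "(\<lambda>m. hausdist (B m) S) \<longlonglongrightarrow> 0"
    by (rule tendsto_sandwich[OF _ _ tendsto_const r0])
       (use hle hausdist_nonneg[OF BC BN] in auto)
  with SC SN show ?thesis by blast
qed


theorem corollary4p4:
  fixes f :: "nat \<Rightarrow> nat \<Rightarrow> 'a::complete_space \<Rightarrow> 'a"
    and \<phi> :: "nat \<Rightarrow> nat \<Rightarrow> real \<Rightarrow> real"
    and n :: nat and A1 :: "'a set"
  assumes n: "n \<ge> 1"
    and cont: "\<And>r i. r \<in> {1..n} \<Longrightarrow> i \<ge> 1 \<Longrightarrow> continuous_on UNIV (f r i)"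
    and comp: "\<And>r i. r \<in> {1..n} \<Longrightarrow> i \<ge> 1 \<Longrightarrow> comparison_function (\<phi> r i)"
    and contr: "\<And>r i. r \<in> {1..n} \<Longrightarrow> i \<ge> 1 \<Longrightarrow> phi_contraction (\<phi> r i) (f r i)"
    and A1: "compact A1" "A1 \<noteq> {}"
    and bdd: "bdd_above ((\<lambda>i. hausdist (hutch n f i A1) A1) ` {1..})"
    and summ: "\<And>t. t > 0 \<Longrightarrow> summable (\<lambda>k. lcomp (maxphi n \<phi>) (Suc k) t)"
  shows "\<exists>!Astar. compact Astar \<and> Astar \<noteq> {} \<and>
           (\<forall>A. compact A \<and> A \<noteq> {} \<longrightarrow>
              (\<lambda>k. hausdist (lcomp (hutch n f) k A) Astar) \<longlonglongrightarrow> 0)"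
proof -
  define \<Phi> where "\<Phi> = maxphi n \<phi>"
  define F where "F = hutch n f"
  have fin: "finite {1..n}" and ne: "{1..n} \<noteq> {}" using n by auto
  have phi_nn: "0 \<le> \<phi> r i t" if "r \<in> {1..n}" "i \<ge> 1" "t \<ge> 0" for r i t
    using comp[OF that(1,2)] that(3) unfolding comparison_function_def by blast
  have phi_mono: "\<phi> r i s \<le> \<phi> r i t" if "r \<in> {1..n}" "i \<ge> 1" "0 \<le> s" "s \<le> t" for r i s t
    using comp[OF that(1,2)] that(3,4) unfolding comparison_function_def mono_on_def by auto
  have Phi_ge: "\<phi> r i t \<le> \<Phi> i t" if "r \<in> {1..n}" for r i t
    unfolding \<Phi>_def maxphi_def using fin that by (intro Max_ge) auto
  have Phi_nn: "0 \<le> \<Phi> i t" if "i \<ge> 1" "t \<ge> 0" for i t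
    using phi_nn[OF _ that, of 1] Phi_ge[of 1 i t] n by auto
  have Phi_mono: "\<Phi> i s \<le> \<Phi> i t" if "i \<ge> 1" "0 \<le> s" "s \<le> t" for i s t
    unfolding \<Phi>_def maxphi_def using fin ne
  proof (intro Max.boundedI)
    fix y assume "y \<in> (\<lambda>r. \<phi> r i s) ` {1..n}"
    then obtain r where r: "r \<in> {1..n}" "y = \<phi> r i s" by auto
    have "\<phi> r i s \<le> \<phi> r i t" by (rule phi_mono[OF r(1) that])
    also have "\<dots> \<le> Max ((\<lambda>r. \<phi> r i t) ` {1..n})" using fin r(1) by (intro Max_ge) auto
    finally show "y \<le> Max ((\<lambda>r. \<phi> r i t) ` {1..n})" using r by simp
  qed auto
  have L_nn: "\<forall>t\<ge>0. 0 \<le> lcomp \<Phi> k t" for k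
  proof (induction k)
    case 0 then show ?case by simp
  next
    case (Suc k) then show ?case using Phi_nn[of "Suc k"] by simp
  qed
  have L_mono: "\<forall>s t. 0 \<le> s \<and> s \<le> t \<longrightarrow> lcomp \<Phi> k s \<le> lcomp \<Phi> k t" for k
  proof (induction k)
    case 0 then show ?case by simp
  next
    case (Suc k)
    show ?case
    proof (intro allI impI)
      fix s t :: real assume st: "0 \<le> s \<and> s \<le> t"
      have "\<Phi> (Suc k) s \<le> \<Phi> (Suc k) t" using Phi_mono[of "Suc k" s t] st by simp
      moreover have "0 \<le> \<Phi> (Suc k) s" using Phi_nn[of "Suc k" s] st by simp
      ultimately show "lcomp \<Phi> (Suc k) s \<le> lcomp \<Phi> (Suc k) t" using Suc by simp
    qed
  qed
  have F_cpt: "compact (F i A) \<and> F i A \<noteq> {}" if "i \<ge> 1" "compact A" "A \<noteq> {}" for i A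
  proof
    have "compact (f r i ` A)" if "r \<in> {1..n}" for r
      using cont[OF that \<open>i \<ge> 1\<close>] \<open>compact A\<close> by (intro compact_continuous_image) (auto intro: continuous_on_subset)
    then show "compact (F i A)" unfolding F_def hutch_def using fin by (intro compact_UN) auto
    show "F i A \<noteq> {}" unfolding F_def hutch_def using ne \<open>A \<noteq> {}\<close> by auto
  qed
  have F_contr: "hausdist (F i A) (F i B) \<le> \<Phi> i (hausdist A B)"
    if i: "i \<ge> 1" and A: "compact A" "A \<noteq> {}" and B: "compact B" "B \<noteq> {}" for i A B
  proof -
    have key: "infdist x (F i Y) \<le> \<Phi> i (hausdist X Y)"
      if X: "compact X" and Y: "compact Y" "Y \<noteq> {}" and x: "x \<in> F i X" for X Y x
    proof -
      obtain r a where r: "r \<in> {1..n}" "a \<in> X" "x = f r i a" using x unfolding F_def hutch_def by auto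
      obtain b where b: "b \<in> Y" "infdist a Y = dist a b" using infdist_attain[OF Y] by blast
      have hb: "dist a b \<le> hausdist X Y" using infdist_le_hausdist[OF X r(2), of Y] b by simp
      have "f r i b \<in> F i Y" unfolding F_def hutch_def using r(1) b(1) by auto
      then have "infdist x (F i Y) \<le> dist (f r i a) (f r i b)" using r(3) by (simp add: infdist_le)
      also have "\<dots> \<le> \<phi> r i (dist a b)" using contr[OF r(1) i] unfolding phi_contraction_def by blast
      also have "\<dots> \<le> \<phi> r i (hausdist X Y)" by (rule phi_mono[OF r(1) i zero_le_dist hb])
      also have "\<dots> \<le> \<Phi> i (hausdist X Y)" by (rule Phi_ge[OF r(1)])
      finally show ?thesis .
    qed
    show ?thesis
    proof (rule hausdist_le)
      show "F i A \<noteq> {}" "F i B \<noteq> {}" using F_cpt i A B by auto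
      show "infdist x (F i B) \<le> \<Phi> i (hausdist A B)" if "x \<in> F i A" for x
        by (rule key[OF A(1) B that])
      show "infdist y (F i A) \<le> \<Phi> i (hausdist A B)" if "y \<in> F i B" for y
        using key[OF B(1) A that] by (simp add: hausdist_sym)
    qed
  qed
  have P_cpt: "compact (lcomp F k A) \<and> lcomp F k A \<noteq> {}" if "compact A" "A \<noteq> {}" for k A
    using that
  proof (induction k arbitrary: A)
    case 0 then show ?case by simp
  next
    case (Suc k)
    have "compact (F (Suc k) A) \<and> F (Suc k) A \<noteq> {}" using F_cpt Suc.prems by simp
    then show ?case using Suc.IH by simp
  qed
  have P_contr: "hausdist (lcomp F k A) (lcomp F k B) \<le> lcomp \<Phi> k (hausdist A B)"
    if "compact A" "A \<noteq> {}" "compact B" "B \<noteq> {}" for k A B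
    using that
  proof (induction k arbitrary: A B)
    case 0 then show ?case by simp
  next
    case (Suc k)
    have cA: "compact (F (Suc k) A)" "F (Suc k) A \<noteq> {}" and cB: "compact (F (Suc k) B)" "F (Suc k) B \<noteq> {}"
      using F_cpt Suc.prems by auto
    have "hausdist (lcomp F (Suc k) A) (lcomp F (Suc k) B)
        = hausdist (lcomp F k (F (Suc k) A)) (lcomp F k (F (Suc k) B))" by simp
    also have "\<dots> \<le> lcomp \<Phi> k (hausdist (F (Suc k) A) (F (Suc k) B))" by (rule Suc.IH[OF cA cB])
    also have "\<dots> \<le> lcomp \<Phi> k (\<Phi> (Suc k) (hausdist A B))"
      using L_mono[of k] F_contr[of "Suc k" A B] Suc.prems hausdist_nonneg[OF cA, of "F (Suc k) B"] by auto
    also have "\<dots> = lcomp \<Phi> (Suc k) (hausdist A B)" by simp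
    finally show ?case .
  qed
  have L_lim: "(\<lambda>k. lcomp \<Phi> k t) \<longlonglongrightarrow> 0" if "t \<ge> 0" for t
  proof -
    define T where "T = max t 1"
    have "summable (\<lambda>k. lcomp \<Phi> (Suc k) T)" unfolding \<Phi>_def T_def by (rule summ) simp
    then have "(\<lambda>k. lcomp \<Phi> (Suc k) T) \<longlonglongrightarrow> 0" by (rule summable_LIMSEQ_zero)
    then have T0: "(\<lambda>k. lcomp \<Phi> k T) \<longlonglongrightarrow> 0" by (rule LIMSEQ_imp_Suc)
    have tT: "0 \<le> t \<and> t \<le> T" using that unfolding T_def by simp
    have e1: "\<forall>\<^sub>F k in sequentially. 0 \<le> lcomp \<Phi> k t"
      using L_nn that by (intro always_eventually) blast
    have e2: "\<forall>\<^sub>F k in sequentially. lcomp \<Phi> k t \<le> lcomp \<Phi> k T"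
      using L_mono tT by (intro always_eventually) blast
    show ?thesis by (rule tendsto_sandwich[OF e1 e2 tendsto_const T0])
  qed
  from bdd have "\<exists>M. \<forall>x\<in>(\<lambda>i. hausdist (hutch n f i A1) A1) ` {1..}. x \<le> M"
    by (simp only: bdd_above_def)
  then obtain M0 where M0': "\<forall>x\<in>(\<lambda>i. hausdist (hutch n f i A1) A1) ` {1..}. x \<le> M0"
    by (rule exE)
  have M0: "hausdist (F i A1) A1 \<le> M0" if "i \<ge> 1" for i
  proof -
    have "i \<in> {1..}" using that by simp
    then have "hausdist (hutch n f i A1) A1 \<in> (\<lambda>i. hausdist (hutch n f i A1) A1) ` {1..}" by (rule imageI)
    with M0' show ?thesis unfolding F_def by (rule bspec)
  qed
  define M where "M = max M0 1"
  define B where "B k = lcomp F k A1" for k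
  define a where "a k = lcomp \<Phi> (Suc k) M" for k
  have BC: "compact (B k)" "B k \<noteq> {}" for k using P_cpt[OF A1] unfolding B_def by auto
  have Ba: "hausdist (B k) (B (Suc k)) \<le> lcomp \<Phi> k M" for k
  proof -
    have c: "compact (F (Suc k) A1)" "F (Suc k) A1 \<noteq> {}" using F_cpt A1 by auto
    have "hausdist (B k) (B (Suc k)) = hausdist (lcomp F k (F (Suc k) A1)) (lcomp F k A1)"
      unfolding B_def by (simp add: hausdist_sym)
    also have "\<dots> \<le> lcomp \<Phi> k (hausdist (F (Suc k) A1) A1)" by (rule P_contr[OF c A1])
    also have "\<dots> \<le> lcomp \<Phi> k M"
      using L_mono[of k] M0[of "Suc k"] hausdist_nonneg[OF c, of A1] unfolding M_def by auto
    finally show ?thesis .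
  qed
  have sa: "summable (\<lambda>k. lcomp \<Phi> k M)"
  proof -
    have "summable (\<lambda>k. lcomp \<Phi> (Suc k) M)" unfolding \<Phi>_def M_def by (rule summ) simp
    then show ?thesis by (subst summable_Suc_iff[symmetric])
  qed
  obtain S where S: "compact S" "S \<noteq> {}" "(\<lambda>k. hausdist (B k) S) \<longlonglongrightarrow> 0"
    using hausdist_complete[OF BC Ba sa] by blast
  have conv: "(\<lambda>k. hausdist (lcomp F k A) S) \<longlonglongrightarrow> 0" if A: "compact A" "A \<noteq> {}" for A
  proof -
    have ub: "hausdist (lcomp F k A) S \<le> lcomp \<Phi> k (hausdist A A1) + hausdist (B k) S" for k
    proof -
      have "hausdist (lcomp F k A) S \<le> hausdist (lcomp F k A) (B k) + hausdist (B k) S"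
        using hausdist_triangle P_cpt[OF A, of k] BC[of k] S(1,2) by blast
      moreover have "hausdist (lcomp F k A) (B k) \<le> lcomp \<Phi> k (hausdist A A1)"
        unfolding B_def by (rule P_contr[OF A A1])
      ultimately show ?thesis by linarith
    qed
    have "(\<lambda>k. lcomp \<Phi> k (hausdist A A1) + hausdist (B k) S) \<longlonglongrightarrow> 0 + 0"
      by (intro tendsto_add L_lim S(3) hausdist_nonneg[OF A])
    moreover have e1: "\<forall>\<^sub>F k in sequentially. 0 \<le> hausdist (lcomp F k A) S"
      using hausdist_nonneg P_cpt[OF A] by (intro always_eventually) blast
    moreover have e2: "\<forall>\<^sub>F k in sequentially. hausdist (lcomp F k A) S \<le> lcomp \<Phi> k (hausdist A A1) + hausdist (B k) S"
      using ub by (intro always_eventually) blast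
    ultimately show ?thesis using tendsto_sandwich[OF e1 e2 tendsto_const] by simp
  qed
  show ?thesis
  proof (rule ex1I[of _ S])
    show "compact S \<and> S \<noteq> {} \<and> (\<forall>A. compact A \<and> A \<noteq> {} \<longrightarrow>
              (\<lambda>k. hausdist (lcomp (hutch n f) k A) S) \<longlonglongrightarrow> 0)"
      using S conv unfolding F_def by blast
  next
    fix S' assume S': "compact S' \<and> S' \<noteq> {} \<and> (\<forall>A. compact A \<and> A \<noteq> {} \<longrightarrow>
              (\<lambda>k. hausdist (lcomp (hutch n f) k A) S') \<longlonglongrightarrow> 0)"
    then have S'l: "(\<lambda>k. hausdist (B k) S') \<longlonglongrightarrow> 0" unfolding B_def F_def using A1 by blast
    have le: "hausdist S' S \<le> hausdist (B k) S' + hausdist (B k) S" for k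
      using hausdist_triangle[of S' "B k" S] S'  BC[of k] S(1,2) by (simp add: hausdist_sym)
    have "(\<lambda>k. hausdist (B k) S' + hausdist (B k) S) \<longlonglongrightarrow> 0 + 0"
      by (intro tendsto_add S'l S(3))
    then have "hausdist S' S \<le> 0 + 0"
      by (rule LIMSEQ_le_const) (use le in blast)
    then have h0: "hausdist S' S \<le> 0" by simp
    have c1: "compact S'" and c2: "S' \<noteq> {}" using S' by (rule conjunct1, blast)
    show "S' = S" by (rule hausdist_zero_eq[OF c1 c2 S(1) S(2) h0])
  qed
qed

end
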